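(* Let $m>0$ be a real number and let $\omega=\omega(q)$ be a positive integer-valued function of $q$ such that $\omega(q) \ge \frac{q}{m}\cdot\frac{\log\log q}{\log q}$ for all sufficiently large $q$. Then for all sufficiently large $q$ there exists a $q$-solvable undirected graph which contains no clique of size $\omega(q)$ (i.e. is $K_{\omega(q)}$-free) and has at most $q^{2m+1}$ vertices.
   Context: All graphs are finite. A directed graph $D=(V,E)$ has arcs $E \subseteq \{(u,v)\in V^2 : u \neq v\}$; an undirected graph is identified with the directed graph having both arcs $(u,v)$ and $(v,u)$ for each edge. $N^-(v)=\{u:(u,v)\in E\}$. For $q\ge2$ let $[q]=\{0,\dots,q-1\}$. A $D$-function over $[q]$ is a map $f=(f_v)_{v\in V}:[q]^V\to[q]^V$ with each $f_v(x)$ depending only on $(x_u)_{u\in N^-(v)}$. $D$ is $q$-solvable if some $D$-function $f$ over $[q]$ has the property that for every $x\in[q]^V$ there is $v$ with $f_v(x)=x_v$. Logarithms are natural logarithms. *)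

theory Defs
  imports "HOL-Analysis.Analysis" "HOL-Library.FuncSet"
begin

definition digraph :: "'a set \<Rightarrow> ('a \<Rightarrow> 'a \<Rightarrow> bool) \<Rightarrow> bool" where
  "digraph V E \<longleftrightarrow> finite V \<and> (\<forall>u v. E u v \<longrightarrow> u \<in> V \<and> v \<in> V \<and> u \<noteq> v)"

definition undirected_graph :: "'a set \<Rightarrow> ('a \<Rightarrow> 'a \<Rightarrow> bool) \<Rightarrow> bool" where
  "undirected_graph V E \<longleftrightarrow> digraph V E \<and> (\<forall>u v. E u v \<longrightarrow> E v u)"

definition in_nbhd :: "'a set \<Rightarrow> ('a \<Rightarrow> 'a \<Rightarrow> bool) \<Rightarrow> 'a \<Rightarrow> 'a set" where
  "in_nbhd V E v = {u \<in> V. E u v}"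

definition configs :: "'a set \<Rightarrow> nat \<Rightarrow> ('a \<Rightarrow> nat) set" where
  "configs V q = (V \<rightarrow>\<^sub>E {0..<q})"

text \<open>A D-function over [q]: f x v is the v-th coordinate of f(x); it lies in [q] and
  depends only on the values of x on the in-neighbourhood of v.\<close>
definition D_function :: "'a set \<Rightarrow> ('a \<Rightarrow> 'a \<Rightarrow> bool) \<Rightarrow> nat \<Rightarrow> (('a \<Rightarrow> nat) \<Rightarrow> 'a \<Rightarrow> nat) \<Rightarrow> bool" where
  "D_function V E q f \<longleftrightarrow>
     (\<forall>x \<in> configs V q. \<forall>v \<in> V. f x v < q) \<and>
     (\<forall>x \<in> configs V q. \<forall>y \<in> configs V q. \<forall>v \<in> V.
        (\<forall>u \<in> in_nbhd V E v. x u = y u) \<longrightarrow> f x v = f y v)"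

definition q_solvable :: "'a set \<Rightarrow> ('a \<Rightarrow> 'a \<Rightarrow> bool) \<Rightarrow> nat \<Rightarrow> bool" where
  "q_solvable V E q \<longleftrightarrow>
     (\<exists>f. D_function V E q f \<and> (\<forall>x \<in> configs V q. \<exists>v \<in> V. f x v = x v))"

definition is_clique :: "'a set \<Rightarrow> ('a \<Rightarrow> 'a \<Rightarrow> bool) \<Rightarrow> 'a set \<Rightarrow> bool" where
  "is_clique V E K \<longleftrightarrow> K \<subseteq> V \<and> (\<forall>u \<in> K. \<forall>v \<in> K. u \<noteq> v \<longrightarrow> E u v)"

definition clique_free :: "'a set \<Rightarrow> ('a \<Rightarrow> 'a \<Rightarrow> bool) \<Rightarrow> nat \<Rightarrow> bool" where
  "clique_free V E k \<longleftrightarrow> \<not> (\<exists>K. is_clique V E K \<and> finite K \<and> card K = k)"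

end

theory Submission
  imports Defs "HOL-Library.Nat_Bijection" "HOL-Real_Asymp.Real_Asymp"
begin


definition relab :: "('a \<Rightarrow> 'b) \<Rightarrow> 'a set \<Rightarrow> ('a \<Rightarrow> 'a \<Rightarrow> bool) \<Rightarrow> 'b \<Rightarrow> 'b \<Rightarrow> bool" where
  "relab h V E = (\<lambda>u v. \<exists>a\<in>V. \<exists>b\<in>V. u = h a \<and> v = h b \<and> E a b)"

lemma relab_undirected:
  assumes "inj_on h V" "undirected_graph V E"
  shows "undirected_graph (h ` V) (relab h V E)"
proof -
  have fin: "finite V" and Ed: "\<And>u v. E u v \<Longrightarrow> u \<in> V \<and> v \<in> V \<and> u \<noteq> v"
    and Es: "\<And>u v. E u v \<Longrightarrow> E v u"
    using assms(2) unfolding undirected_graph_def digraph_def by blast+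
  have A: "u \<in> h ` V \<and> v \<in> h ` V \<and> u \<noteq> v" if uv: "relab h V E u v" for u v
  proof -
    obtain a b where ab: "a \<in> V" "b \<in> V" "u = h a" "v = h b" "E a b"
      using uv unfolding relab_def by blast
    have "a \<noteq> b" using Ed[OF ab(5)] by blast
    then have "h a \<noteq> h b" using assms(1) ab(1,2) unfolding inj_on_def by blast
    then show ?thesis using ab by blast
  qed
  have B: "relab h V E v u" if "relab h V E u v" for u v
    using that Es unfolding relab_def by blast
  show ?thesis unfolding undirected_graph_def digraph_def using fin A B by blast
qed

lemma relab_clique:
  assumes "inj_on h V" "\<And>K. is_clique V E K \<Longrightarrow> finite K \<Longrightarrow> card K \<le> B"
    and "is_clique (h ` V) (relab h V E) K'" "finite K'"
  shows "card K' \<le> B"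
proof -
  define K where "K = {a\<in>V. h a \<in> K'}"
  have sub: "K' \<subseteq> h ` V" using assms(3) unfolding is_clique_def by auto
  have img: "h ` K = K'" using sub unfolding K_def by auto
  have injK: "inj_on h K" using assms(1) unfolding K_def inj_on_def by auto
  have finK: "finite K" using img injK assms(4) finite_imageD by blast
  have "is_clique V E K"
    unfolding is_clique_def
  proof (intro conjI ballI impI)
    show "K \<subseteq> V" unfolding K_def by auto
  next
    fix u v assume uv: "u \<in> K" "v \<in> K" "u \<noteq> v"
    then have "h u \<noteq> h v" using assms(1) unfolding K_def inj_on_def by auto
    then have "relab h V E (h u) (h v)" using assms(3) uv unfolding is_clique_def K_def by auto
    then obtain a b where ab: "a \<in> V" "b \<in> V" "h u = h a" "h v = h b" "E a b"
      unfolding relab_def by blast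
    have "u = a" "v = b" using ab uv assms(1) unfolding K_def inj_on_def by auto
    then show "E u v" using ab by simp
  qed
  then have "card K \<le> B" using assms(2) finK by blast
  then show ?thesis using card_image[OF injK] img by simp
qed

lemma relab_solvable:
  assumes "inj_on h V" "q_solvable V E q"
  shows "q_solvable (h ` V) (relab h V E) q"
proof -
  obtain f where fD: "D_function V E q f" and fw: "\<forall>x \<in> configs V q. \<exists>v \<in> V. f x v = x v"
    using assms(2) unfolding q_solvable_def by blast
  define pull where "pull x' = restrict (\<lambda>a. x' (h a)) V" for x' :: "'b \<Rightarrow> nat"
  define f' where "f' x' v' = f (pull x') (inv_into V h v')" for x' v'
  have pc: "pull x' \<in> configs V q" if "x' \<in> configs (h ` V) q" for x'
    using that unfolding configs_def pull_def by (auto simp: PiE_iff)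
  have inv: "inv_into V h (h v) = v" if "v \<in> V" for v
    using assms(1) that by simp
  have fv: "f x v < q" if "x \<in> configs V q" "v \<in> V" for x v
    using fD that unfolding D_function_def by blast
  have fdep: "f x v = f y v" if "x \<in> configs V q" "y \<in> configs V q" "v \<in> V"
     "\<forall>u \<in> in_nbhd V E v. x u = y u" for x y v
    using fD that unfolding D_function_def by blast
  show ?thesis unfolding q_solvable_def
  proof (intro exI conjI)
    show "D_function (h ` V) (relab h V E) q f'"
      unfolding D_function_def
    proof (intro conjI ballI impI)
      fix x v' assume x: "x \<in> configs (h ` V) q" and v': "v' \<in> h ` V"
      then obtain v where v: "v \<in> V" "v' = h v" by auto
      show "f' x v' < q" using fv[OF pc[OF x] v(1)] v unfolding f'_def by (simp add: inv)
    next
      fix x y v' assume x: "x \<in> configs (h ` V) q" and y: "y \<in> configs (h ` V) q"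
        and v': "v' \<in> h ` V" and ag: "\<forall>u\<in>in_nbhd (h ` V) (relab h V E) v'. x u = y u"
      then obtain v where v: "v \<in> V" "v' = h v" by auto
      have "\<forall>u\<in>in_nbhd V E v. pull x u = pull y u"
      proof
        fix u assume "u \<in> in_nbhd V E v"
        then have "u \<in> V" "E u v" unfolding in_nbhd_def by auto
        then have "h u \<in> in_nbhd (h ` V) (relab h V E) v'"
          unfolding in_nbhd_def relab_def using v by auto
        then show "pull x u = pull y u" using ag \<open>u \<in> V\<close> unfolding pull_def by auto
      qed
      then show "f' x v' = f' y v'"
        using fdep[OF pc[OF x] pc[OF y] v(1)] v unfolding f'_def by (simp add: inv)
    qed
  next
    show "\<forall>x\<in>configs (h ` V) q. \<exists>v\<in>h ` V. f' x v = x v"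
    proof
      fix x assume x: "x \<in> configs (h ` V) q"
      obtain v where "v \<in> V" "f (pull x) v = pull x v" using fw pc[OF x] by blast
      then show "\<exists>v\<in>h ` V. f' x v = x v"
        proof (intro bexI[of _ "h v"])
        show "h v \<in> h ` V" using \<open>v \<in> V\<close> by simp
        show "f' x (h v) = x (h v)" using \<open>v \<in> V\<close> \<open>f (pull x) v = pull x v\<close>
          unfolding f'_def by (simp add: inv pull_def)
      qed
    qed
  qed
qed



definition blowE :: "'a set \<Rightarrow> ('a \<Rightarrow> 'a \<Rightarrow> bool) \<Rightarrow> nat \<Rightarrow> 'a \<times> nat \<Rightarrow> 'a \<times> nat \<Rightarrow> bool" where
  "blowE V E k p p' \<longleftrightarrow> fst p \<in> V \<and> fst p' \<in> V \<and> snd p < k \<and> snd p' < k \<and>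
     ((fst p = fst p' \<and> snd p \<noteq> snd p') \<or> E (fst p) (fst p'))"

lemma blow_undirected:
  assumes "undirected_graph V E"
  shows "undirected_graph (V \<times> {0..<k}) (blowE V E k)"
  using assms unfolding undirected_graph_def digraph_def blowE_def
  by (auto simp: prod_eq_iff)

lemma blow_solvable:
  assumes "q_solvable V E r" "0 < q" "q \<le> k * r"
  shows "q_solvable (V \<times> {0..<k}) (blowE V E k) q"
proof -
  obtain g where gD: "D_function V E r g" and gw: "\<forall>y \<in> configs V r. \<exists>v \<in> V. g y v = y v"
    using assms(1) unfolding q_solvable_def by blast
  have gv: "g x v < r" if "x \<in> configs V r" "v \<in> V" for x v
    using gD that unfolding D_function_def by blast
  have gdep: "g x v = g y v" if "x \<in> configs V r" "y \<in> configs V r" "v \<in> V"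
     "\<forall>u \<in> in_nbhd V E v. x u = y u" for x y v
    using gD that unfolding D_function_def by blast
  have kpos: "0 < k" using assms by (cases k) auto
  define sig where "sig x u = (\<Sum>i<k. x (u,i)) mod q" for x :: "'a \<times> nat \<Rightarrow> nat" and u
  define Y where "Y x = restrict (\<lambda>u. sig x u div k) V" for x
  define T where "T x u i = (\<Sum>j\<in>{..<k}-{i}. x (u, j))" for x :: "'a \<times> nat \<Rightarrow> nat" and u i
  define f' where "f' x p = nat ((int (g (Y x) (fst p) * k + snd p) - int (T x (fst p) (snd p))) mod int q)" for x p
  have Yc: "Y x \<in> configs V r" for x
  proof -
    have "sig x u div k < r" for u
    proof -
      have "sig x u < k * r" using assms(3) unfolding sig_def
        using assms(2) mod_less_divisor order_less_le_trans by blast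
      then show ?thesis by (simp add: less_mult_imp_div_less mult.commute)
    qed
    then show ?thesis unfolding configs_def Y_def by auto
  qed
  show ?thesis unfolding q_solvable_def
  proof (intro exI conjI)
    show "D_function (V \<times> {0..<k}) (blowE V E k) q f'"
      unfolding D_function_def
    proof (intro conjI ballI impI)
      fix x p assume "x \<in> configs (V \<times> {0..<k}) q" "p \<in> V \<times> {0..<k}"
      show "f' x p < q" unfolding f'_def using assms(2)
        by (simp add: nat_less_iff)
    next
      fix x y p assume x: "x \<in> configs (V \<times> {0..<k}) q" and y: "y \<in> configs (V \<times> {0..<k}) q"
        and p: "p \<in> V \<times> {0..<k}" and ag: "\<forall>u\<in>in_nbhd (V \<times> {0..<k}) (blowE V E k) p. x u = y u"
      obtain v i where vi: "p = (v,i)" "v \<in> V" "i < k" using p by auto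
      have "\<forall>u\<in>in_nbhd V E v. Y x u = Y y u"
      proof
        fix u assume "u \<in> in_nbhd V E v"
        then have u: "u \<in> V" "E u v" unfolding in_nbhd_def by auto
        have "x (u,j) = y (u,j)" if "j < k" for j
          using ag that u vi unfolding in_nbhd_def blowE_def by auto
        then show "Y x u = Y y u" unfolding Y_def sig_def using u by simp
      qed
      then have "g (Y x) v = g (Y y) v" using gdep[OF Yc Yc vi(2)] by blast
      moreover have "T x v i = T y v i"
      proof -
        have "x (v,j) = y (v,j)" if "j \<in> {..<k}-{i}" for j
          using ag that vi unfolding in_nbhd_def blowE_def by auto
        then show ?thesis unfolding T_def by (rule sum.cong[OF refl])
      qed
      ultimately show "f' x p = f' y p" unfolding f'_def vi by simp
    qed
  next
    show "\<forall>x\<in>configs (V \<times> {0..<k}) q. \<exists>p\<in>V \<times> {0..<k}. f' x p = x p"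
    proof
      fix x assume x: "x \<in> configs (V \<times> {0..<k}) q"
      obtain v where v: "v \<in> V" "g (Y x) v = Y x v" using gw Yc by blast
      define i where "i = sig x v mod k"
      have ik: "i < k" unfolding i_def using kpos by simp
      have gk: "g (Y x) v * k + i = sig x v" using v unfolding i_def Y_def by simp
      have xq: "x (v,i) < q" using x v(1) ik unfolding configs_def by auto
      have split: "(\<Sum>j<k. x (v,j)) = x (v,i) + T x v i"
        unfolding T_def using ik by (simp add: sum.remove)
      have "f' x (v,i) = nat ((int ((x (v,i) + T x v i) mod q) - int (T x v i)) mod int q)"
        unfolding f'_def using gk split by (simp add: sig_def)
      also have "\<dots> = nat ((int (x (v,i)) + int (T x v i) - int (T x v i)) mod int q)"
        by (simp add: zmod_int mod_diff_left_eq)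
      also have "\<dots> = x (v,i)" using xq by simp
      finally show "\<exists>p\<in>V \<times> {0..<k}. f' x p = x p" using v(1) ik by force
    qed
  qed
qed



lemma hit_exists:
  assumes "finite S" "card S \<le> a" "\<forall>x\<in>S. \<forall>i<a. x i < r" "0 < r"
  shows "\<exists>c. (\<forall>i<a. c i < r) \<and> (\<forall>x\<in>S. \<exists>i<a. x i = c i)"
proof -
  have "card S \<le> card {0..<a}" using assms(2) by simp
  then obtain e where e: "inj_on e S" "e ` S \<subseteq> {0..<a}"
    using card_le_inj[OF assms(1)] by blast
  define c where "c i = (if i \<in> e ` S then (inv_into S e i) i else 0)" for i
  show ?thesis
  proof (intro exI[of _ c] conjI allI impI ballI)
    fix i assume "i < a"
    show "c i < r"
    proof (cases "i \<in> e ` S")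
      case True
      then have "inv_into S e i \<in> S" by (simp add: inv_into_into)
      then show ?thesis using True assms(3) \<open>i < a\<close> unfolding c_def by auto
    qed (simp add: c_def assms(4))
  next
    fix x assume x: "x \<in> S"
    have "e x < a" using e x by auto
    moreover have "x (e x) = c (e x)" unfolding c_def using x e(1) by simp
    ultimately show "\<exists>i<a. x i = c i" by blast
  qed
qed

definition bipE :: "nat \<Rightarrow> nat \<Rightarrow> nat \<Rightarrow> nat \<Rightarrow> bool" where
  "bipE a n u v \<longleftrightarrow> u < n \<and> v < n \<and> (u < a) \<noteq> (v < a)"

lemma bip_undirected: "undirected_graph {0..<n} (bipE a n)"
  unfolding undirected_graph_def digraph_def bipE_def by auto

lemma bip_solvable:
  assumes r: "0 < r"
    and dX: "\<forall>j<N. d j \<in> ({0..<a} \<rightarrow>\<^sub>E {0..<r}) \<rightarrow>\<^sub>E {0..<r}"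
    and surj: "\<forall>S. S \<subseteq> ({0..<a} \<rightarrow>\<^sub>E {0..<r}) \<and> card S = a + 1 \<longrightarrow> (\<exists>j<N. d j ` S = {0..<r})"
  shows "q_solvable {0..<a+N} (bipE a (a+N)) r"
proof -
  define X where "X = {0..<a} \<rightarrow>\<^sub>E {0..<r}"
  have finX: "finite X" unfolding X_def by (simp add: finite_PiE)
  define Bad where "Bad y = {x\<in>X. \<forall>j<N. d j x \<noteq> y (a+j)}" for y :: "nat \<Rightarrow> nat"
  have cardBad: "card (Bad y) \<le> a" if y: "y \<in> configs {0..<a+N} r" for y
  proof (rule ccontr)
    assume "\<not> card (Bad y) \<le> a"
    then obtain S where S: "S \<subseteq> Bad y" "card S = a+1" "finite S"
      using obtain_subset_with_card_n[of "a+1" "Bad y"] by auto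
    have "S \<subseteq> X" using S unfolding Bad_def by auto
    then obtain j where j: "j < N" "d j ` S = {0..<r}" using surj S unfolding X_def by blast
    have "y (a+j) < r" using y j unfolding configs_def by auto
    then obtain x where "x \<in> S" "d j x = y (a+j)" using j by (metis atLeastLessThan_iff imageE zero_le)
    then show False using S j unfolding Bad_def by auto
  qed
  have finBad: "finite (Bad y)" for y using finX unfolding Bad_def by simp
  define c where "c y = (SOME c. (\<forall>i<a. c i < r) \<and> (\<forall>x\<in>Bad y. \<exists>i<a. x i = c i))" for y
  have cprop: "(\<forall>i<a. c y i < r) \<and> (\<forall>x\<in>Bad y. \<exists>i<a. x i = c y i)"
    if "y \<in> configs {0..<a+N} r" for y
  proof -
    have "\<forall>x\<in>Bad y. \<forall>i<a. x i < r" unfolding Bad_def X_def by auto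
    then have "\<exists>c. (\<forall>i<a. c i < r) \<and> (\<forall>x\<in>Bad y. \<exists>i<a. x i = c i)"
      using hit_exists[OF finBad cardBad[OF that] _ r] by blast
    then show ?thesis unfolding c_def by (rule someI_ex)
  qed
  define g where "g y u = (if u < a then c y u else d (u - a) (restrict y {0..<a}))" for y u
  have rX: "restrict y {0..<a} \<in> X" if "y \<in> configs {0..<a+N} r" for y
    using that unfolding configs_def X_def by auto
  show ?thesis unfolding q_solvable_def
  proof (intro exI conjI)
    show "D_function {0..<a+N} (bipE a (a+N)) r g"
      unfolding D_function_def
    proof (intro conjI ballI impI)
      fix y u assume y: "y \<in> configs {0..<a+N} r" and u: "u \<in> {0..<a+N}"
      show "g y u < r"
      proof (cases "u < a")
        case True then show ?thesis using cprop[OF y] unfolding g_def by simp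
      next
        case False
        then have "u - a < N" using u by auto
        then have "d (u-a) \<in> X \<rightarrow>\<^sub>E {0..<r}" using dX unfolding X_def by blast
        then show ?thesis using False rX[OF y] unfolding g_def by auto
      qed
    next
      fix x y u assume x: "x \<in> configs {0..<a+N} r" and y: "y \<in> configs {0..<a+N} r"
        and u: "u \<in> {0..<a+N}" and ag: "\<forall>w\<in>in_nbhd {0..<a+N} (bipE a (a+N)) u. x w = y w"
      show "g x u = g y u"
      proof (cases "u < a")
        case True
        have "x (a+j) = y (a+j)" if "j < N" for j
          using ag that True u unfolding in_nbhd_def bipE_def by auto
        then have "Bad x = Bad y" unfolding Bad_def by auto
        then show ?thesis unfolding g_def c_def using True by simp
      next
        case False
        have "x w = y w" if "w < a" for w
          using ag that False u unfolding in_nbhd_def bipE_def by auto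
        then have "restrict x {0..<a} = restrict y {0..<a}" by auto
        then show ?thesis unfolding g_def using False by simp
      qed
    qed
  next
    show "\<forall>y\<in>configs {0..<a+N} r. \<exists>u\<in>{0..<a+N}. g y u = y u"
    proof
      fix y assume y: "y \<in> configs {0..<a+N} r"
      show "\<exists>u\<in>{0..<a+N}. g y u = y u"
      proof (cases "restrict y {0..<a} \<in> Bad y")
        case True
        then obtain i where "i < a" "restrict y {0..<a} i = c y i" using cprop[OF y] by blast
        then show ?thesis unfolding g_def by (intro bexI[of _ i]) auto
      next
        case False
        then obtain j where "j < N" "d j (restrict y {0..<a}) = y (a+j)"
          using rX[OF y] unfolding Bad_def by auto
        then show ?thesis unfolding g_def by (intro bexI[of _ "a+j"]) auto
      qed
    qed
  qed
qed



lemma pow_succ_ge: "x^(n+1) + (n+1)*x^n \<le> (x+1::nat)^(n+1)"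
proof (induction n)
  case 0 then show ?case by simp
next
  case (Suc n)
  have "(x+1)^(Suc n+1) = (x+1)*(x+1)^(n+1)" by simp
  also have "\<dots> \<ge> (x+1)*(x^(n+1) + (n+1)*x^n)" using Suc by (intro mult_le_mono2)
  finally have h: "(x+1)*(x^(n+1) + (n+1)*x^n) \<le> (x+1)^(Suc n+1)" .
  have "x^(Suc n+1) + (Suc n+1)*x^(Suc n) = x*x^(n+1) + (n+1)*x^(n+1) + x^(n+1)"
    by (simp add: algebra_simps)
  also have "\<dots> \<le> (x+1)*(x^(n+1) + (n+1)*x^n)"
    by (simp add: algebra_simps)
  finally show ?case using h by linarith
qed

lemma two_pow_bound: assumes "1 \<le> r" shows "2*(r-1)^r \<le> (r::nat)^r"
proof -
  obtain n where n: "r = n+1" using assms by (metis add.commute le_Suc_ex)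
  have "n^(n+1) + (n+1)*n^n \<le> (n+1)^(n+1)" by (rule pow_succ_ge)
  moreover have "n^(n+1) \<le> (n+1)*n^n" by simp
  ultimately show ?thesis using n by simp
qed

lemma count_arith:
  fixes r a N B C :: nat
  assumes r: "2 \<le> r" and aa: "a + 1 = 2*r^2" and NN: "N = a*(a+1)+1"
    and ineq: "(r^(a+1))^N \<le> r^(a*(a+1)) * (r * (r-1)^(a+1))^N"
  shows False
proof -
  have e: "a+1 = r*(2*r)" using aa by (simp add: power2_eq_square)
  have "2^(2*r) * (r-1)^(a+1) = 2^(2*r) * ((r-1)^r)^(2*r)"
    unfolding e power_mult ..
  also have "\<dots> = (2*(r-1)^r)^(2*r)" by (simp add: power_mult_distrib)
  also have "\<dots> \<le> (r^r)^(2*r)" using two_pow_bound r by (intro power_mono) auto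
  also have "\<dots> = r^(a+1)" unfolding e power_mult ..
  finally have key: "2^(2*r) * (r-1)^(a+1) \<le> r^(a+1)" .
  have gen: "(r * Y)^N * 2^(2*r*N) = r^N * (2^(2*r) * Y)^N" for Y :: nat
    unfolding power_mult[of 2 "2*r" N] power_mult_distrib by (simp only: mult_ac)
  have "(r^(a+1))^N * 2^(2*r*N) \<le> r^(a*(a+1)) * (r * (r-1)^(a+1))^N * 2^(2*r*N)"
    using ineq by simp
  also have "\<dots> = r^(a*(a+1)) * r^N * (2^(2*r) * (r-1)^(a+1))^N"
    using gen[of "(r-1)^(a+1)"] by (simp only: mult.assoc)
  also have "\<dots> \<le> r^(a*(a+1)) * r^N * (r^(a+1))^N"
    using key by (intro mult_le_mono2 power_mono) auto
  finally have "(r^(a+1))^N * 2^(2*r*N) \<le> (r^(a+1))^N * r^(a*(a+1)+N)"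
    by (simp add: power_add algebra_simps)
  then have h1: "2^(2*r*N) \<le> r^(a*(a+1)+N)" using r by simp
  have "r^(a*(a+1)+N) < (2^r)^(a*(a+1)+N)"
    using r NN by (intro power_strict_mono) (auto simp: less_exp)
  then have "2^(2*r*N) < (2::nat)^(r*(a*(a+1)+N))" using h1 by (simp add: power_mult)
  then have "2*r*N < r*(a*(a+1)+N)" by simp
  then have "2*N < a*(a+1)+N" using r by (metis mult.assoc mult.commute mult_less_cancel1)
  then show False using NN by simp
qed



lemma family_exists:
  assumes r: "2 \<le> r" and aa: "a + 1 = 2*r^2" and NN: "N = a*(a+1)+1"
  shows "\<exists>d. (\<forall>j<N. d j \<in> ({0..<a} \<rightarrow>\<^sub>E {0..<r}) \<rightarrow>\<^sub>E {0..<r}) \<and>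
    (\<forall>S. S \<subseteq> ({0..<a} \<rightarrow>\<^sub>E {0..<r}) \<and> card S = a + 1 \<longrightarrow> (\<exists>j<N. d j ` S = {0..<r}))"
proof (rule ccontr)
  assume contra: "\<not> ?thesis"
  define X where "X = {0..<a} \<rightarrow>\<^sub>E {0..<(r::nat)}"
  define M where "M = card X"
  have finX: "finite X" unfolding X_def by (simp add: finite_PiE)
  have M: "M = r^a" unfolding M_def X_def by (simp add: card_PiE)
  define F where "F = X \<rightarrow>\<^sub>E {0..<r}"
  have finF: "finite F" unfolding F_def using finX by (simp add: finite_PiE)
  define Phi where "Phi = {0..<N} \<rightarrow>\<^sub>E F"
  have finPhi: "finite Phi" unfolding Phi_def using finF by (simp add: finite_PiE)
  define SS where "SS = {S. S \<subseteq> X \<and> card S = a+1}"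
  define NS where "NS S = {f\<in>F. f ` S \<noteq> {0..<r}}" for S
  have finSS: "finite SS" unfolding SS_def using finX by simp
  have cover: "Phi \<subseteq> (\<Union>S\<in>SS. {0..<N} \<rightarrow>\<^sub>E NS S)"
  proof
    fix d assume d: "d \<in> Phi"
    have "\<forall>j<N. d j \<in> X \<rightarrow>\<^sub>E {0..<r}" using d unfolding Phi_def F_def by auto
    then have dd: "\<forall>j<N. d j \<in> ({0..<a} \<rightarrow>\<^sub>E {0..<r}) \<rightarrow>\<^sub>E {0..<r}" unfolding X_def .
    have nq: "\<not> (\<forall>S. S \<subseteq> X \<and> card S = a + 1 \<longrightarrow> (\<exists>j<N. d j ` S = {0..<r}))"
    proof
      assume "\<forall>S. S \<subseteq> X \<and> card S = a + 1 \<longrightarrow> (\<exists>j<N. d j ` S = {0..<r})"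
      then have "\<forall>S. S \<subseteq> ({0..<a} \<rightarrow>\<^sub>E {0..<r}) \<and> card S = a + 1 \<longrightarrow> (\<exists>j<N. d j ` S = {0..<r})"
        unfolding X_def .
      with dd contra show False by blast
    qed
    then obtain S where S: "S \<subseteq> X" "card S = a+1" "\<forall>j<N. d j ` S \<noteq> {0..<r}"
      by auto
    have "d \<in> {0..<N} \<rightarrow>\<^sub>E NS S" using d S(3) unfolding Phi_def NS_def by (auto simp: PiE_iff)
    then show "d \<in> (\<Union>S\<in>SS. {0..<N} \<rightarrow>\<^sub>E NS S)" using S unfolding SS_def by blast
  qed
  have cardNS: "card (NS S) \<le> r * ((r-1)^(a+1) * r^(M-(a+1)))" if S: "S \<in> SS" for S
  proof -
    have SX: "S \<subseteq> X" "card S = a+1" using S unfolding SS_def by auto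
    have finS: "finite S" using SX finX finite_subset by blast
    define P where "P c = (\<Pi>\<^sub>E x\<in>X. if x \<in> S then {0..<r}-{c} else {0..<r})" for c
    have sub: "NS S \<subseteq> (\<Union>c\<in>{0..<r}. P c)"
    proof
      fix f assume f: "f \<in> NS S"
      then have "f ` S \<subseteq> {0..<r}" using SX unfolding NS_def F_def by auto
      then obtain c where c: "c \<in> {0..<r}" "c \<notin> f ` S" using f unfolding NS_def by blast
      have "f \<in> P c" using f c SX unfolding NS_def F_def P_def by (auto simp: PiE_iff)
      then show "f \<in> (\<Union>c\<in>{0..<r}. P c)" using c by blast
    qed
    have cP: "card (P c) = (r-1)^(a+1) * r^(M-(a+1))" if "c \<in> {0..<r}" for c
    proof -
      have "card (P c) = (\<Prod>x\<in>X. card (if x \<in> S then {0..<r}-{c} else {0..<r}))"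
        unfolding P_def using finX by (simp add: card_PiE)
      also have "\<dots> = (\<Prod>x\<in>X. if x \<in> S then r-1 else r)"
        using that by (intro prod.cong) auto
      also have "\<dots> = (\<Prod>x\<in>X \<inter> {x. x\<in>S}. r-1) * (\<Prod>x\<in>X \<inter> - {x. x\<in>S}. r)"
        using finX by (rule prod.If_cases)
      also have "X \<inter> {x. x\<in>S} = S" using SX by auto
      also have "X \<inter> - {x. x\<in>S} = X - S" by auto
      finally have "card (P c) = (\<Prod>x\<in>S. r - 1) * (\<Prod>x\<in>X - S. r)" .
      moreover have "card (X - S) = M - (a+1)" using SX finS unfolding M_def by (simp add: card_Diff_subset)
      ultimately show ?thesis using SX by simp
    qed
    have "card (NS S) \<le> card (\<Union>c\<in>{0..<r}. P c)"
      using sub by (intro card_mono) (auto simp: P_def finX finite_PiE)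
    also have "\<dots> \<le> (\<Sum>c\<in>{0..<r}. card (P c))" by (rule card_UN_le) simp
    also have "\<dots> = r * ((r-1)^(a+1) * r^(M-(a+1)))" using cP by simp
    finally show ?thesis .
  qed
  have "card Phi \<le> card (\<Union>S\<in>SS. {0..<N} \<rightarrow>\<^sub>E NS S)"
    using cover by (intro card_mono) (auto simp: finSS finite_PiE NS_def finF)
  also have "\<dots> \<le> (\<Sum>S\<in>SS. card ({0..<N} \<rightarrow>\<^sub>E NS S))" by (rule card_UN_le[OF finSS])
  also have "\<dots> \<le> (\<Sum>S\<in>SS. (r * ((r-1)^(a+1) * r^(M-(a+1))))^N)"
  proof (intro sum_mono)
    fix S assume S: "S \<in> SS"
    have "card ({0..<N} \<rightarrow>\<^sub>E NS S) = card (NS S)^N" by (simp add: card_PiE)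
    then show "card ({0..<N} \<rightarrow>\<^sub>E NS S) \<le> (r * ((r-1)^(a+1) * r^(M-(a+1))))^N"
      using power_mono[OF cardNS[OF S], of N] by simp
  qed
  also have "\<dots> = card SS * (r * ((r-1)^(a+1) * r^(M-(a+1))))^N" by simp
  also have "\<dots> \<le> r^(a*(a+1)) * (r * ((r-1)^(a+1) * r^(M-(a+1))))^N"
  proof (intro mult_le_mono1)
    have Mge: "a+1 \<le> M"
    proof -
      have "a < 2^a" by (rule less_exp)
      also have "(2::nat)^a \<le> r^a" using r by (intro power_mono) auto
      finally show ?thesis using M by simp
    qed
    have "card SS = M choose (a+1)" unfolding SS_def M_def using n_subsets[OF finX] by simp
    also have "\<dots> \<le> M^(a+1)" using Mge by (rule binomial_le_pow)
    also have "\<dots> = r^(a*(a+1))" unfolding M power_mult ..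
    finally show "card SS \<le> r^(a*(a+1))" .
  qed
  finally have A: "card Phi \<le> r^(a*(a+1)) * (r * ((r-1)^(a+1) * r^(M-(a+1))))^N" .
  have "card Phi = (r^M)^N" unfolding Phi_def F_def using finX by (simp add: card_PiE M_def)
  define B where "B = r^(M-(a+1))"
  have Mge: "a+1 \<le> M"
  proof -
    have "a < 2^a" by (rule less_exp)
    also have "(2::nat)^a \<le> r^a" using r by (intro power_mono) auto
    finally show ?thesis using M by simp
  qed
  have rM: "r^M = r^(a+1) * B" unfolding B_def power_add[symmetric] using Mge by simp
  have "(r^(a+1))^N * B^N \<le> r^(a*(a+1)) * (r * (r-1)^(a+1))^N * B^N"
    using A \<open>card Phi = (r^M)^N\<close> rM unfolding B_def[symmetric]
    by (simp add: power_mult_distrib mult_ac)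
  moreover have "0 < B^N" unfolding B_def using r by simp
  ultimately have "(r^(a+1))^N \<le> r^(a*(a+1)) * (r * (r-1)^(a+1))^N"
    using mult_le_cancel2 by blast
  then show False using count_arith[OF r aa NN] by blast
qed



lemma fiber_card:
  assumes "finite K" "K \<subseteq> UNIV \<times> {0..<k}" "\<forall>p\<in>K. \<forall>p'\<in>K. fst p = fst p'"
  shows "card K \<le> k"
proof (cases "K = {}")
  case False
  then obtain p0 where "p0 \<in> K" by blast
  have "K \<subseteq> {fst p0} \<times> {0..<k}"
  proof
    fix p assume p: "p \<in> K"
    then have "snd p < k" using assms(2) by auto
    moreover have "fst p = fst p0" using assms(3) p \<open>p0 \<in> K\<close> by blast
    ultimately show "p \<in> {fst p0} \<times> {0..<k}" by (simp add: mem_Times_iff)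
  qed
  then have "card K \<le> card ({fst p0} \<times> {0..<k})" by (intro card_mono) auto
  then show ?thesis by simp
qed simp

lemma blow_bip_clique:
  assumes "is_clique ({0..<n} \<times> {0..<k}) (blowE {0..<n} (bipE a n) k) K" "finite K"
  shows "card K \<le> 2 * k"
proof -
  define KA where "KA = {p\<in>K. fst p < a}"
  define KB where "KB = {p\<in>K. \<not> fst p < a}"
  have sub: "K \<subseteq> UNIV \<times> {0..<k}" using assms(1) unfolding is_clique_def by auto
  have adj: "blowE {0..<n} (bipE a n) k p p'" if "p \<in> K" "p' \<in> K" "p \<noteq> p'" for p p'
    using assms(1) that unfolding is_clique_def by blast
  have "card KA \<le> k"
  proof (rule fiber_card)
    show "finite KA" "KA \<subseteq> UNIV \<times> {0..<k}" using assms(2) sub unfolding KA_def by auto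
    show "\<forall>p\<in>KA. \<forall>p'\<in>KA. fst p = fst p'"
    proof (intro ballI)
      fix p p' assume "p \<in> KA" "p' \<in> KA"
      show "fst p = fst p'"
      proof (cases "p = p'")
        case False
        then have "blowE {0..<n} (bipE a n) k p p'" using adj \<open>p \<in> KA\<close> \<open>p' \<in> KA\<close> unfolding KA_def by blast
        then have "fst p = fst p' \<or> bipE a n (fst p) (fst p')" unfolding blowE_def by blast
        moreover have "\<not> bipE a n (fst p) (fst p')" using \<open>p \<in> KA\<close> \<open>p' \<in> KA\<close> unfolding KA_def bipE_def by auto
        ultimately show ?thesis by blast
      qed simp
    qed
  qed
  moreover have "card KB \<le> k"
  proof (rule fiber_card)
    show "finite KB" "KB \<subseteq> UNIV \<times> {0..<k}" using assms(2) sub unfolding KB_def by auto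
    show "\<forall>p\<in>KB. \<forall>p'\<in>KB. fst p = fst p'"
    proof (intro ballI)
      fix p p' assume "p \<in> KB" "p' \<in> KB"
      show "fst p = fst p'"
      proof (cases "p = p'")
        case False
        then have "blowE {0..<n} (bipE a n) k p p'" using adj \<open>p \<in> KB\<close> \<open>p' \<in> KB\<close> unfolding KB_def by blast
        then have "fst p = fst p' \<or> bipE a n (fst p) (fst p')" unfolding blowE_def by blast
        moreover have "\<not> bipE a n (fst p) (fst p')" using \<open>p \<in> KB\<close> \<open>p' \<in> KB\<close> unfolding KB_def bipE_def by auto
        ultimately show ?thesis by blast
      qed simp
    qed
  qed
  moreover have "card K \<le> card KA + card KB"
  proof -
    have "K = KA \<union> KB" unfolding KA_def KB_def by auto
    then show ?thesis by (metis card_Un_le)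
  qed
  ultimately show ?thesis by linarith
qed



lemma asy1: assumes "(m::real) > 0"
  shows "\<forall>\<^sub>F q in sequentially. 4 * (ln (real q))^4 \<le> real q powr (2*m)"
proof -
  have "\<forall>\<^sub>F x in at_top. 4 * (ln (x::real))^4 \<le> x powr (2*m)" using assms by real_asymp
  then show ?thesis using filterlim_real_sequentially eventually_compose_filterlim by blast
qed

lemma asy2: assumes "(m::real) > 0"
  shows "\<forall>\<^sub>F q in sequentially. 2 * real q / (ln (real q) - 1) + 2 < real q / m * (ln (ln (real q)) / ln (real q))"
proof -
  have "\<forall>\<^sub>F x in at_top. 2 * (x::real) / (ln x - 1) + 2 < x / m * (ln (ln x) / ln x)" using assms by real_asymp
  then show ?thesis using filterlim_real_sequentially eventually_compose_filterlim by blast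
qed

lemma asy3: "\<forall>\<^sub>F q in sequentially. 3 \<le> ln (real q)"
proof -
  have "\<forall>\<^sub>F x in at_top. 3 \<le> ln (x::real)" by real_asymp
  then show ?thesis using filterlim_real_sequentially eventually_compose_filterlim by blast
qed


lemma construct:
  assumes r: "2 \<le> r" and q: "0 < q" and qk: "q \<le> k * r"
  shows "\<exists>(V::nat set) E. undirected_graph V E \<and> q_solvable V E q \<and>
     (\<forall>K. is_clique V E K \<and> finite K \<longrightarrow> card K \<le> 2 * k) \<and> card V = (2*r^2)^2 * k"
proof -
  define a where "a = 2*r^2 - 1"
  have aa: "a+1 = 2*r^2" using r unfolding a_def by (simp add: power2_eq_square)
  define N where "N = a*(a+1)+1"
  obtain d where d1: "\<forall>j<N. d j \<in> ({0..<a} \<rightarrow>\<^sub>E {0..<r}) \<rightarrow>\<^sub>E {0..<r}"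
    and d2: "\<forall>S. S \<subseteq> ({0..<a} \<rightarrow>\<^sub>E {0..<r}) \<and> card S = a + 1 \<longrightarrow> (\<exists>j<N. d j ` S = {0..<r})"
    using family_exists[OF r aa N_def] by blast
  have r0: "0 < r" using r by simp
  have bs: "q_solvable {0..<a+N} (bipE a (a+N)) r" by (rule bip_solvable[OF r0 d1 d2])
  define W where "W = {0..<a+N} \<times> {0..<k}"
  define F where "F = blowE {0..<a+N} (bipE a (a+N)) k"
  have Wu: "undirected_graph W F" unfolding W_def F_def by (intro blow_undirected bip_undirected)
  have Ws: "q_solvable W F q" unfolding W_def F_def by (rule blow_solvable[OF bs q qk])
  have inj: "inj_on prod_encode W" by (rule inj_prod_encode)
  show ?thesis
  proof (intro exI conjI allI impI)
    show "undirected_graph (prod_encode ` W) (relab prod_encode W F)" by (rule relab_undirected[OF inj Wu])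
    show "q_solvable (prod_encode ` W) (relab prod_encode W F) q" by (rule relab_solvable[OF inj Ws])
  next
    fix K assume K: "is_clique (prod_encode ` W) (relab prod_encode W F) K \<and> finite K"
    show "card K \<le> 2 * k"
    proof (rule relab_clique[OF inj _ conjunct1[OF K] conjunct2[OF K]])
      fix K' assume "is_clique W F K'" "finite K'"
      then show "card K' \<le> 2 * k" unfolding W_def F_def by (rule blow_bip_clique)
    qed
  next
    have "a + N = (a+1)^2" unfolding N_def by (simp add: power2_eq_square)
    then show "card (prod_encode ` W) = (2*r^2)^2 * k"
      using card_image[OF inj] unfolding W_def aa by (simp add: card_cartesian_product)
  qed
qed

theorem theorem4:
  fixes m :: real and \<omega> :: "nat \<Rightarrow> nat"
  assumes "m > 0"
    and "\<And>q. \<omega> q > 0"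
    and "\<forall>\<^sub>F q in sequentially.
           real (\<omega> q) \<ge> real q / m * (ln (ln (real q)) / ln (real q))"
  shows "\<forall>\<^sub>F q in sequentially. \<exists>(V :: nat set) E.
           undirected_graph V E \<and> q_solvable V E q \<and> clique_free V E (\<omega> q) \<and>
           real (card V) \<le> real q powr (2 * m + 1)"
  using assms(3) asy1[OF assms(1)] asy2[OF assms(1)] asy3
proof eventually_elim
  case (elim q)
  note om = elim(1) and A1 = elim(2) and A2 = elim(3) and A3 = elim(4)
  define L where "L = ln (real q)"
  have q0: "0 < q" using A3 by (cases q) auto
  have qr: "0 < real q" using q0 by simp
  define r where "r = nat \<lfloor>L\<rfloor>"
  have fl: "real r = of_int \<lfloor>L\<rfloor>" unfolding r_def using A3 unfolding L_def[symmetric] by simp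
  have rL: "real r \<le> L" "L - 1 < real r" unfolding fl using floor_correct[of L] by linarith+
  have r2: "2 \<le> r" using rL A3 unfolding L_def by linarith
  define k where "k = q div r + 1"
  have qk: "q \<le> k * r"
  proof -
    have e: "r * (q div r) + q mod r = q" by (rule mult_div_mod_eq)
    moreover have "q mod r < r" using r2 by simp
    ultimately have "q \<le> r + r * (q div r)" by linarith
    then show ?thesis unfolding k_def by (simp add: algebra_simps)
  qed
  obtain V :: "nat set" and E where VE: "undirected_graph V E" "q_solvable V E q"
    "\<forall>K. is_clique V E K \<and> finite K \<longrightarrow> card K \<le> 2 * k" "card V = (2*r^2)^2 * k"
    using construct[OF r2 q0 qk] by blast
  have Lpos: "0 < L - 1" using A3 unfolding L_def by simp
  have kreal: "real k \<le> real q / real r + 1" unfolding k_def using of_nat_div_le_of_nat[of q r] by simp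
  have "real q / real r \<le> real q / (L - 1)"
    using rL(2) Lpos qr by (intro divide_left_mono) auto
  moreover have "2 * real q / (L - 1) = 2 * (real q / (L - 1))" by simp
  ultimately have "2 * real k < real (\<omega> q)"
    using kreal A2 om unfolding L_def by linarith
  then have cf: "clique_free V E (\<omega> q)"
    using VE(3) unfolding clique_free_def by force
  have kq: "k \<le> q"
  proof -
    have "q div r \<le> q div 2" using r2 by (simp add: div_le_mono2)
    moreover have "q div 2 + 1 \<le> q" using A3 q0
    proof -
      have "2 \<le> q" 
      proof (rule ccontr)
        assume "\<not> 2 \<le> q"
        then have "q = 1" using q0 by simp
        then show False using A3 by simp
      qed
      then show ?thesis by linarith
    qed
    ultimately show ?thesis unfolding k_def by linarith
  qed
  have "(2*r^2)^2 = 4 * r^4" by (simp add: power_mult_distrib flip: power_mult)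
  then have "card V = 4 * r^4 * k" using VE(4) by simp
  then have "real (card V) = 4 * real r ^ 4 * real k" by simp
  also have "\<dots> \<le> 4 * L ^ 4 * real q"
    using rL(1) kq by (intro mult_mono power_mono) auto
  also have "\<dots> \<le> real q powr (2*m) * real q" using A1 qr unfolding L_def by (intro mult_right_mono) auto
  also have "\<dots> = real q powr (2*m+1)" using qr by (simp add: powr_add)
  finally show ?case using VE(1,2) cf by blast
qed

end
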